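(* Let $X\sim\mathrm{ECR}(\beta,\lambda)$ and $r\in(-2\beta,1)$. Then $\mathbb E(X^r)$ is finite and $$\mathbb E(X^r)=\beta(\lambda\sqrt2)^r\,B\!\left(1-r,\tfrac r2+\beta\right)\,{}_2F_1\!\left(-\tfrac r2,\tfrac r2+\beta;\,1-\tfrac r2+\beta;\,\tfrac12\right).$$
   Context: The exponentiated Cauchy–Rayleigh distribution $\mathrm{ECR}(\beta,\lambda)$, with shape parameter $\beta>0$ and scale parameter $\lambda>0$, is the distribution on $(0,\infty)$ with cdf $F(x)=\left(1-\frac{\lambda}{\sqrt{\lambda^2+x^2}}\right)^{\beta}$ for $x>0$. $B(\cdot,\cdot)$ is the beta function and ${}_2F_1(a,b;c;z)=\sum_{k\ge0}\frac{(a)_k(b)_k}{(c)_k}\frac{z^k}{k!}$ is the Gauss hypergeometric function, with $(a)_k=\Gamma(a+k)/\Gamma(a)$. *)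

theory Defs
  imports "HOL-Probability.Probability"
begin

definition ECR_cdf :: "real \<Rightarrow> real \<Rightarrow> real \<Rightarrow> real" where
  "ECR_cdf \<beta> l x = (if x > 0 then (1 - l / sqrt (l\<^sup>2 + x\<^sup>2)) powr \<beta> else 0)"

definition hyp2F1 :: "real \<Rightarrow> real \<Rightarrow> real \<Rightarrow> real \<Rightarrow> real" where
  "hyp2F1 a b c z = (\<Sum>k. pochhammer a k * pochhammer b k / pochhammer c k * z ^ k / fact k)"

end

theory Submission
  imports Defs "HOL-Analysis.Analysis"
begin


lemma nn_powr_int:
  fixes \<beta> c :: real assumes "\<beta> > 0" "c \<ge> 0"
  shows "(\<integral>\<^sup>+v. ennreal (\<beta> * v powr (\<beta>-1)) * indicator {0..c} v \<partial>lborel) = ennreal (c powr \<beta>)"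
proof -
  have "((\<lambda>x. x powr (\<beta>-1)) has_integral (c powr \<beta> / \<beta>)) {0..c}"
    using has_integral_powr_from_0[of "\<beta>-1" c] assms by simp
  then have "((\<lambda>x. \<beta> * x powr (\<beta>-1)) has_integral (\<beta> * (c powr \<beta> / \<beta>))) {0..c}"
    by (rule has_integral_mult_right)
  then have "((\<lambda>x. \<beta> * x powr (\<beta>-1)) has_integral (c powr \<beta>)) {0..c}"
    using assms by simp
  from nn_integral_has_integral_lebesgue'[OF _ this] show ?thesis using assms by simp
qed

lemma sq_le: "0 \<le> (a::real) \<Longrightarrow> 0 \<le> b \<Longrightarrow> a \<le> b \<longleftrightarrow> a\<^sup>2 \<le> b\<^sup>2"
  by (simp add: power_mono_iff)

lemma region:
  fixes v x l :: real assumes "0 < v" "v < 1" "x > 0" "l > 0"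
  shows "(l * sqrt (v * (2 - v)) / (1 - v) \<le> x) \<longleftrightarrow> v \<le> 1 - l / sqrt (l\<^sup>2 + x\<^sup>2)"
proof -
  have s: "sqrt (l\<^sup>2 + x\<^sup>2) > 0" using assms by (simp add: add_pos_pos)
  have vv: "v * (2 - v) \<ge> 0" using assms by simp
  have "(l * sqrt (v * (2 - v)) / (1 - v) \<le> x) \<longleftrightarrow> l * sqrt (v * (2 - v)) \<le> x * (1 - v)"
    using assms by (simp add: divide_le_eq)
  also have "\<dots> \<longleftrightarrow> (l * sqrt (v * (2 - v)))\<^sup>2 \<le> (x * (1 - v))\<^sup>2"
    using assms vv by (intro sq_le) auto
  also have "\<dots> \<longleftrightarrow> l\<^sup>2 * (v * (2 - v)) \<le> x\<^sup>2 * (1 - v)\<^sup>2"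
    using vv by (simp add: power_mult_distrib)
  also have "\<dots> \<longleftrightarrow> l\<^sup>2 \<le> (1 - v)\<^sup>2 * (l\<^sup>2 + x\<^sup>2)"
    by (simp add: algebra_simps power2_eq_square)
  also have "\<dots> \<longleftrightarrow> l \<le> (1 - v) * sqrt (l\<^sup>2 + x\<^sup>2)"
  proof -
    have "(1 - v)\<^sup>2 * (l\<^sup>2 + x\<^sup>2) = ((1 - v) * sqrt (l\<^sup>2 + x\<^sup>2))\<^sup>2"
      by (simp add: power_mult_distrib)
    moreover have "(1 - v) * sqrt (l\<^sup>2 + x\<^sup>2) \<ge> 0" using assms by simp
    moreover have "l \<ge> 0" using assms by simp
    ultimately show ?thesis
      using sq_le[of l "(1 - v) * sqrt (l\<^sup>2 + x\<^sup>2)"] by simp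
  qed
  also have "\<dots> \<longleftrightarrow> l / sqrt (l\<^sup>2 + x\<^sup>2) \<le> 1 - v"
    using s by (simp add: divide_le_eq ac_simps)
  also have "\<dots> \<longleftrightarrow> v \<le> 1 - l / sqrt (l\<^sup>2 + x\<^sup>2)" by linarith
  finally show ?thesis .
qed



lemma poch_series:
  fixes r z :: real assumes "\<bar>z\<bar> < 1"
  shows "(\<lambda>k. pochhammer (-r/2) k / fact k * z ^ k) sums (1 - z) powr (r/2)"
proof -
  have "(\<lambda>n. ((r/2) gchoose n) * (-z)^n) sums (1 + -z) powr (r/2)"
    by (rule gen_binomial_real) (use assms in simp)
  moreover have "((r/2) gchoose n) * (-z)^n = pochhammer (-r/2) n / fact n * z ^ n" for n
  proof -
    have "((r/2) gchoose n) * (-z)^n = ((-1)^n * (-1)^n) * pochhammer (-(r/2)) n / fact n * z ^ n"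
      by (simp add: gbinomial_pochhammer power_minus[of z])
    also have "(-1::real)^n * (-1)^n = 1" by (simp flip: power_add)
    finally show ?thesis by simp
  qed
  ultimately show ?thesis by simp
qed

lemma poch_abs_summable:
  fixes r z :: real assumes "\<bar>z\<bar> < 1"
  shows "summable (\<lambda>k. norm (pochhammer (-r/2) k / fact k * z ^ k))"
proof -
  define x where "x = (\<bar>z\<bar> + 1) / 2"
  have x: "\<bar>x\<bar> < 1" "\<bar>z\<bar> < \<bar>x\<bar>" using assms by (auto simp: x_def)
  have "summable (\<lambda>k. pochhammer (-r/2) k / fact k * x ^ k)"
    using poch_series[OF x(1), of r] by (simp add: sums_iff)
  from powser_insidea[OF this, of z] x show ?thesis by simp
qed

lemma poch_le:
  fixes a b :: real assumes "a > 0" "b \<ge> 0"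
  shows "pochhammer a k \<le> pochhammer (a + b) k"
proof (induction k)
  case (Suc k)
  have "pochhammer a k * (a + real k) \<le> pochhammer (a + b) k * (a + b + real k)"
    by (intro mult_mono Suc) (use assms in \<open>auto intro!: pochhammer_nonneg\<close>)
  then show ?case by (simp add: pochhammer_Suc)
qed simp

lemma Beta_shift:
  fixes a b :: real assumes "a > 0" "b > 0"
  shows "Beta (a + real k) b = Beta a b * pochhammer a k / pochhammer (a + b) k"
proof -
  have na: "a \<notin> \<int>\<^sub>\<le>\<^sub>0" and nab: "a + b \<notin> \<int>\<^sub>\<le>\<^sub>0" using assms
    by (auto elim!: nonpos_Ints_cases)
  have g1: "Gamma (a + real k) = pochhammer a k * Gamma a"
    using pochhammer_Gamma[OF na, of k] Gamma_real_pos[OF assms(1)] by simp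
  have g2: "Gamma (a + b + real k) = pochhammer (a + b) k * Gamma (a + b)"
  proof -
    have "Gamma (a + b) > 0" using assms by (intro Gamma_real_pos) simp
    then show ?thesis using pochhammer_Gamma[OF nab, of k] by simp
  qed
  have "pochhammer (a + b) k > 0" using assms by (intro pochhammer_pos) simp
  moreover have "Gamma (a + b) > 0" using assms by (intro Gamma_real_pos) simp
  ultimately show ?thesis
    unfolding Beta_def using g1 g2 by (simp add: algebra_simps)
qed

lemma Beta_leb:
  fixes a b :: real assumes "a > 0" "b > 0"
  shows "integrable lborel (\<lambda>v. indicator {0<..<1} v * (v powr (a-1) * (1-v) powr (b-1)))"
    and "(\<integral>v. indicator {0<..<1} v * (v powr (a-1) * (1-v) powr (b-1)) \<partial>lborel) = Beta a b"
proof -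
  have eq: "indicator {0<..<1} v * (v powr (a-1) * (1-v) powr (b-1)) =
            indicator {0..1} v *\<^sub>R (v powr (a-1) * (1-v) powr (b-1))" for v :: real
    by (auto simp: indicator_def)
  have si: "set_integrable lborel {0..1} (\<lambda>t::real. t powr (a - 1) * (1 - t) powr (b - 1))"
    by (rule integrable_Beta) (use assms in auto)
  then show "integrable lborel (\<lambda>v. indicator {0<..<1} v * (v powr (a-1) * (1-v) powr (b-1)))"
    unfolding set_integrable_def eq .
  have "(LINT x : {0..1} | lborel. x powr (a-1) * (1-x) powr (b-1)) = integral {0..1} (\<lambda>x::real. x powr (a-1) * (1-x) powr (b-1))"
    by (rule set_borel_integral_eq_integral(2)[OF si])
  also have "\<dots> = Beta a b"
    using has_integral_Beta_real[OF assms] by (simp add: integral_unique)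
  finally show "(\<integral>v. indicator {0<..<1} v * (v powr (a-1) * (1-v) powr (b-1)) \<partial>lborel) = Beta a b"
    unfolding eq set_lebesgue_integral_def .
qed



lemma hpow:
  fixes v l \<beta> r :: real assumes "0 < v" "v < 1" "l > 0"
  shows "\<beta> * v powr (\<beta>-1) * (l * sqrt (v * (2 - v)) / (1-v)) powr r =
     \<beta> * (l * sqrt 2) powr r * (v powr (r/2 + \<beta> - 1) * (1-v) powr ((1-r)-1) * (1 - v/2) powr (r/2))"
proof -
  have p: "v * (2 - v) > 0" "1 - v > 0" "1 - v/2 > 0" "sqrt 2 > 0" using assms by auto
  have e1: "(l * sqrt (v * (2 - v)) / (1-v)) powr r = l powr r * (v * (2 - v)) powr (r/2) / (1-v) powr r"
    using assms p by (simp add: powr_divide powr_mult powr_half_sqrt[symmetric] powr_powr)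
  have e2: "(v * (2 - v)) powr (r/2) = v powr (r/2) * 2 powr (r/2) * (1 - v/2) powr (r/2)"
  proof -
    have "v * (2 - v) = v * (2 * (1 - v/2))" by (simp add: algebra_simps)
    moreover have "(v * (2 * (1 - v/2))) powr (r/2) = v powr (r/2) * (2 * (1 - v/2)) powr (r/2)"
      by (rule powr_mult)
    moreover have "(2 * (1 - v/2)) powr (r/2) = 2 powr (r/2) * (1 - v/2) powr (r/2)"
      by (rule powr_mult)
    ultimately show ?thesis by simp
  qed
  have e3: "(l * sqrt 2) powr r = l powr r * 2 powr (r/2)"
    using assms by (simp add: powr_mult powr_half_sqrt[symmetric] powr_powr)
  have e4: "v powr (\<beta>-1) * v powr (r/2) = v powr (r/2 + \<beta> - 1)"
    using assms by (simp add: powr_add[symmetric] algebra_simps)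
  have e5: "(1-v) powr ((1-r)-1) = 1 / (1-v) powr r"
  proof -
    have "(1-v) powr ((1-r)-1) = (1-v) powr (-r)" by simp
    also have "\<dots> = inverse ((1-v) powr r)" by (rule powr_minus)
    finally show ?thesis by (simp add: inverse_eq_divide)
  qed
  have ring_id: "\<And>A L B T C D::real. \<beta> * A * (L * (B * T * C) / D) = \<beta> * (L * T) * (A * B * (1 / D) * C)"
    by (simp add: divide_inverse mult_ac)
  show ?thesis unfolding e1 e2 e3 e5 e4[symmetric] by (rule ring_id)
qed


theorem corollary3:
  fixes M :: "'a measure" and X :: "'a \<Rightarrow> real" and \<beta> l r :: real
  assumes "prob_space M"
    and "X \<in> borel_measurable M"
    and "\<beta> > 0" and "l > 0"
    and "\<And>x. cdf (distr M borel X) x = ECR_cdf \<beta> l x"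
    and "-2 * \<beta> < r" and "r < 1"
  shows "integrable M (\<lambda>\<omega>. X \<omega> powr r)
    \<and> (\<integral>\<omega>. X \<omega> powr r \<partial>M) =
        \<beta> * (l * sqrt 2) powr r * Beta (1 - r) (r / 2 + \<beta>)
          * hyp2F1 (- r / 2) (r / 2 + \<beta>) (1 - r / 2 + \<beta>) (1 / 2)"
proof -
  interpret P: prob_space M by fact
  note bpos = \<open>\<beta> > 0\<close> and lpos = \<open>l > 0\<close>
  define a where "a = r/2 + \<beta>"
  define b where "b = 1 - r"
  have apos: "a > 0" using assms(6) by (simp add: a_def)
  have bpos': "b > 0" using assms(7) by (simp add: b_def)
  define d where "d = (\<lambda>v::real. indicator {0<..<1} v * (\<beta> * v powr (\<beta>-1)))"
  define N where "N = density lborel (\<lambda>v. ennreal (d v))"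
  define h where "h = (\<lambda>v::real. l * sqrt (v * (2 - v)) / (1 - v))"
  have d_meas[measurable]: "d \<in> borel_measurable borel" unfolding d_def by measurable
  have h_meas[measurable]: "h \<in> borel_measurable borel" unfolding h_def by measurable
  have d_nn: "d v \<ge> 0" for v unfolding d_def using bpos by (simp add: indicator_def)
  have sN: "sets N = sets borel" unfolding N_def by simp
  have spN: "space N = UNIV" unfolding N_def by simp
  have hN: "h \<in> borel_measurable N"
    using h_meas by (subst measurable_cong_sets[OF sN refl])
  have emN: "emeasure N A = (\<integral>\<^sup>+ v. ennreal (d v) * indicator A v \<partial>lborel)" if "A \<in> sets borel" for A
    unfolding N_def by (rule emeasure_density) (use that in auto)
  have hpos: "h v > 0" if "0 < v" "v < 1" for v
  proof -
    have "v * (2 - v) > 0" using that by simp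
    then have "sqrt (v * (2 - v)) > 0" by simp
    then have "l * sqrt (v * (2 - v)) > 0" using lpos by simp
    moreover have "1 - v > 0" using that by simp
    ultimately show ?thesis unfolding h_def by simp
  qed

  have cdfN: "cdf (distr N borel h) x = ECR_cdf \<beta> l x" for x
  proof -
    have hs: "h -` {..x} \<in> sets borel" by (rule measurable_sets_borel[OF h_meas]) simp
    have "cdf (distr N borel h) x = measure N (h -` {..x} \<inter> space N)"
      unfolding cdf_def by (rule measure_distr[OF hN]) simp
    also have "\<dots> = enn2real (\<integral>\<^sup>+ v. ennreal (d v) * indicator (h -` {..x}) v \<partial>lborel)"
      unfolding measure_def spN using emN[OF hs] by simp
    also have "\<dots> = ECR_cdf \<beta> l x"
    proof (cases "x > 0")
      case False
      have pz: "ennreal (d v) * indicator (h -` {..x}) v = 0" for v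
      proof (cases "0 < v \<and> v < 1")
        case True
        then have "\<not> h v \<le> x" using hpos[of v] False by auto
        then show ?thesis by (simp add: indicator_def)
      qed (auto simp: d_def indicator_def)
      have fz: "(\<lambda>v. ennreal (d v) * indicator (h -` {..x}) v) = (\<lambda>v. 0)"
        by (intro ext) (rule pz)
      have z: "(\<integral>\<^sup>+ v. ennreal (d v) * indicator (h -` {..x}) v \<partial>lborel) = 0"
        by (subst fz) simp
      have e: "ECR_cdf \<beta> l x = 0" using False by (simp add: ECR_cdf_def)
      show ?thesis unfolding z e by simp
    next
      case True
      define c where "c = 1 - l / sqrt (l\<^sup>2 + x\<^sup>2)"
      have sq: "l < sqrt (l\<^sup>2 + x\<^sup>2)"
        using True lpos by (intro real_less_rsqrt) (simp add: power2_eq_square)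
      have sqp: "sqrt (l\<^sup>2 + x\<^sup>2) > 0" using sq lpos by linarith
      have q1: "l / sqrt (l\<^sup>2 + x\<^sup>2) < 1" using sq sqp by (simp add: divide_less_eq)
      have q2: "l / sqrt (l\<^sup>2 + x\<^sup>2) > 0" using sqp lpos by simp
      have c0: "0 < c" "c < 1" using q1 q2 by (simp_all add: c_def)
      have pw: "ennreal (d v) * indicator (h -` {..x}) v = ennreal (\<beta> * v powr (\<beta>-1)) * indicator {0..c} v" for v
      proof (cases "0 < v \<and> v < 1")
        case True
        have "(h v \<le> x) \<longleftrightarrow> v \<le> c"
          unfolding h_def c_def by (rule region) (use True \<open>x>0\<close> lpos in auto)
        then show ?thesis using True by (auto simp: d_def indicator_def)
      next
        case False
        then consider "v < 0" | "v = 0" | "v \<ge> 1" by linarith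
        then show ?thesis
        proof cases
          case 3
          then have "v \<notin> {0..c}" using c0 by auto
          then show ?thesis using 3 by (simp add: d_def)
        qed (auto simp: d_def indicator_def)
      qed
      have fw: "(\<lambda>v. ennreal (d v) * indicator (h -` {..x}) v) = (\<lambda>v. ennreal (\<beta> * v powr (\<beta>-1)) * indicator {0..c} v)"
        by (intro ext) (rule pw)
      have "(\<integral>\<^sup>+ v. ennreal (d v) * indicator (h -` {..x}) v \<partial>lborel) =
            (\<integral>\<^sup>+ v. ennreal (\<beta> * v powr (\<beta>-1)) * indicator {0..c} v \<partial>lborel)"
        by (subst fw) (rule refl)
      also have "\<dots> = ennreal (c powr \<beta>)"
        using c0 by (intro nn_powr_int bpos) simp
      finally have z: "(\<integral>\<^sup>+ v. ennreal (d v) * indicator (h -` {..x}) v \<partial>lborel) = ennreal (c powr \<beta>)" .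
      have e: "ECR_cdf \<beta> l x = c powr \<beta>" using True by (simp add: ECR_cdf_def c_def)
      show ?thesis unfolding z e by simp
    qed
    finally show ?thesis .
  qed

  have "emeasure N (space N) = 1"
  proof -
    have "emeasure N (space N) = (\<integral>\<^sup>+ v. ennreal (d v) * indicator UNIV v \<partial>lborel)"
      unfolding spN by (rule emN) simp
    also have "\<dots> = (\<integral>\<^sup>+ v. ennreal (\<beta> * v powr (\<beta>-1)) * indicator {0..1} v \<partial>lborel)"
    proof (rule nn_integral_cong_AE)
      show "AE v in lborel. ennreal (d v) * indicator UNIV v = ennreal (\<beta> * v powr (\<beta>-1)) * indicator {0..1} v"
        using AE_lborel_singleton[of "1::real"] by eventually_elim (auto simp: d_def indicator_def)
    qed
    also have "\<dots> = 1" using nn_powr_int[OF bpos, of 1] by simp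
    finally show ?thesis .
  qed
  then have probN: "prob_space N" by (rule prob_spaceI)
  have rd1: "real_distribution (distr N borel h)"
    by (rule prob_space.real_distribution_distr[OF probN hN])
  have rd2: "real_distribution (distr M borel X)"
    by (rule P.real_distribution_distr) (use assms(2) in simp)
  have mu_eq: "distr M borel X = distr N borel h"
  proof (rule cdf_unique[OF rd2 rd1])
    show "cdf (distr M borel X) = cdf (distr N borel h)"
    proof (rule ext)
      fix x show "cdf (distr M borel X) x = cdf (distr N borel h) x"
        by (simp only: assms(5) cdfN)
    qed
  qed

  have pw_meas[measurable]: "(\<lambda>x::real. x powr r) \<in> borel_measurable borel" by measurable
  have int_iff: "integrable M (\<lambda>\<omega>. X \<omega> powr r) \<longleftrightarrow> integrable lborel (\<lambda>v. d v * h v powr r)"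
  proof -
    have "integrable M (\<lambda>\<omega>. X \<omega> powr r) \<longleftrightarrow> integrable (distr M borel X) (\<lambda>x. x powr r)"
      using assms(2) by (subst integrable_distr_eq) auto
    also have "\<dots> \<longleftrightarrow> integrable N (\<lambda>v. h v powr r)"
      unfolding mu_eq using hN by (subst integrable_distr_eq) auto
    also have "\<dots> \<longleftrightarrow> integrable lborel (\<lambda>v. d v * h v powr r)"
      unfolding N_def by (subst integrable_density) (auto simp: d_nn)
    finally show ?thesis .
  qed
  have int_eq: "(\<integral>\<omega>. X \<omega> powr r \<partial>M) = (\<integral>v. d v * h v powr r \<partial>lborel)"
  proof -
    have "(\<integral>\<omega>. X \<omega> powr r \<partial>M) = (\<integral>x. x powr r \<partial>distr M borel X)"
      using assms(2) by (subst integral_distr) auto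
    also have "\<dots> = (\<integral>v. h v powr r \<partial>N)"
      unfolding mu_eq using hN by (subst integral_distr) auto
    also have "\<dots> = (\<integral>v. d v * h v powr r \<partial>lborel)"
      unfolding N_def by (subst integral_density) (auto simp: d_nn)
    finally show ?thesis .
  qed

  define K where "K = \<beta> * (l * sqrt 2) powr r"
  define G where "G = (\<lambda>v::real. indicator {0<..<1} v * (v powr (a-1) * (1-v) powr (b-1) * (1 - v/2) powr (r/2)))"
  have dG: "d v * h v powr r = K * G v" for v
  proof (cases "0 < v \<and> v < 1")
    case True
    then show ?thesis using hpow[of v l \<beta> r] lpos
      by (simp add: d_def h_def K_def G_def a_def b_def mult.assoc)
  qed (auto simp: d_def G_def)

  define p where "p = (\<lambda>k. pochhammer (-r/2) k / fact k :: real)"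
  define f where "f = (\<lambda>k v. indicator {0<..<1} v * (v powr (a-1) * (1-v) powr (b-1)) * (p k * (v/2)^k))"
  define t where "t = (\<lambda>k. pochhammer (-r/2) k * pochhammer a k / pochhammer (a + b) k * (1/2)^k / fact k :: real)"
  have f_alt: "f k v = (p k * (1/2)^k) * (indicator {0<..<1} v * (v powr (a + real k - 1) * (1-v) powr (b-1)))" for k v
  proof (cases "0 < v \<and> v < 1")
    case True
    then have "v powr (a + real k - 1) = v powr (a - 1) * v ^ k"
      by (simp add: powr_add[symmetric] powr_realpow[symmetric] algebra_simps)
    then show ?thesis using True by (simp add: f_def power_divide field_simps)
  qed (auto simp: f_def)
  have f_int: "integrable lborel (f k)" for k
    unfolding f_alt[abs_def] by (intro integrable_mult_right Beta_leb(1)) (use apos bpos' in auto)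
  have f_integral: "(\<integral>v. f k v \<partial>lborel) = Beta a b * t k" for k
  proof -
    have "(\<integral>v. f k v \<partial>lborel) = p k * (1/2)^k * Beta (a + real k) b"
      unfolding f_alt by (subst integral_mult_right_zero) (use Beta_leb(2)[of "a + real k" b] apos bpos' in auto)
    also have "\<dots> = Beta a b * t k"
      unfolding Beta_shift[OF apos bpos'] by (simp add: p_def t_def field_simps)
    finally show ?thesis .
  qed
  have norm_f: "norm (f k v) = norm (p k * (1/2)^k) * (indicator {0<..<1} v * (v powr (a + real k - 1) * (1-v) powr (b-1)))" for k v
    unfolding f_alt by (simp add: abs_mult indicator_def)
  have norm_f_int: "(\<integral>v. norm (f k v) \<partial>lborel) = norm (p k * (1/2)^k) * Beta (a + real k) b" for k
    unfolding norm_f by (subst integral_mult_right_zero) (use Beta_leb(2)[of "a + real k" b] apos bpos' in auto)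
  have Bab: "Beta a b > 0" using apos bpos' by (simp add: Beta_def Gamma_real_pos)
  have sum3: "summable (\<lambda>k. \<integral>v. norm (f k v) \<partial>lborel)"
  proof (rule summable_comparison_test')
    show "summable (\<lambda>k. Beta a b * norm (p k * (1/2)^k))"
      using poch_abs_summable[of "1/2" r] by (intro summable_mult) (simp add: p_def)
    fix k :: nat
    have pk: "pochhammer a k > 0" "pochhammer (a + b) k > 0" using apos bpos' by (auto intro!: pochhammer_pos)
    have "Beta (a + real k) b \<le> Beta a b"
      unfolding Beta_shift[OF apos bpos'] using poch_le[OF apos, of b k] bpos' Bab pk
      by (simp add: divide_le_eq mult_left_mono)
    moreover have "Beta (a + real k) b \<ge> 0"
      using apos bpos' by (simp add: Beta_def Gamma_real_pos less_imp_le)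
    ultimately show "norm (\<integral>v. norm (f k v) \<partial>lborel) \<le> Beta a b * norm (p k * (1/2)^k)"
      unfolding norm_f_int by (simp add: abs_mult mult.commute mult_right_mono)
  qed
  have sum2: "AE v in lborel. summable (\<lambda>k. norm (f k v))"
  proof (rule AE_I2)
    fix v :: real
    show "summable (\<lambda>k. norm (f k v))"
    proof (cases "0 < v \<and> v < 1")
      case True
      have "summable (\<lambda>k. norm (indicator {0<..<1} v * (v powr (a-1) * (1-v) powr (b-1))) * norm (p k * (v/2)^k))"
        using poch_abs_summable[of "v/2" r] True by (intro summable_mult) (simp add: p_def)
      moreover have "(\<lambda>k. norm (f k v)) = (\<lambda>k. norm (indicator {0<..<1} v * (v powr (a-1) * (1-v) powr (b-1))) * norm (p k * (v/2)^k))"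
        by (rule ext) (simp only: f_def norm_mult)
      ultimately show ?thesis by simp
    qed (simp add: f_def)
  qed
  have G_sum: "G v = (\<Sum>k. f k v)" for v
  proof (cases "0 < v \<and> v < 1")
    case True
    have "(\<lambda>k. p k * (v/2)^k) sums (1 - v/2) powr (r/2)"
      using poch_series[of "v/2" r] True by (simp add: p_def)
    then have "(\<lambda>k. f k v) sums (indicator {0<..<1} v * (v powr (a-1) * (1-v) powr (b-1)) * (1 - v/2) powr (r/2))"
      unfolding f_def by (rule sums_mult)
    moreover have "G v = indicator {0<..<1} v * (v powr (a-1) * (1-v) powr (b-1)) * (1 - v/2) powr (r/2)"
      by (simp add: G_def mult.assoc)
    ultimately show ?thesis by (simp add: sums_iff)
  qed (simp add: f_def G_def)
  have G_int: "integrable lborel G"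
    unfolding G_sum[abs_def] by (rule integrable_suminf[OF f_int sum2 sum3])
  have G_integral: "(\<integral>v. G v \<partial>lborel) = (\<Sum>k. Beta a b * t k)"
    unfolding G_sum[abs_def] using integral_suminf[OF f_int sum2 sum3] f_integral by simp
  have "summable (\<lambda>k. Beta a b * t k)"
    using summable_integral[OF f_int sum2 sum3] f_integral by simp
  then have t_sum: "summable t" using Bab by (simp add: summable_cmult_iff)
  have hyp: "hyp2F1 (- r / 2) (r / 2 + \<beta>) (1 - r / 2 + \<beta>) (1 / 2) = (\<Sum>k. t k)"
    unfolding hyp2F1_def t_def a_def b_def by (simp add: algebra_simps)

  have "integrable lborel (\<lambda>v. d v * h v powr r)"
    unfolding dG using G_int by simp
  moreover have "(\<integral>v. d v * h v powr r \<partial>lborel) = K * (Beta a b * (\<Sum>k. t k))"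
    unfolding dG using G_integral suminf_mult[OF t_sum] by simp
  ultimately show ?thesis
    using int_iff int_eq hyp
    by (simp add: K_def a_def b_def Beta_commute[of "1 - r"] mult.assoc)
qed

end
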